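(* Let $(X_1,\dots,X_d)$, $d\ge 3$, be a binary random vector following a determinantal point process with correlation kernel $K$, where $K$ is a real symmetric $d\times d$ matrix with all eigenvalues strictly in $(0,1)$, all entries of $K$ are nonzero, and $K_{1i}>0$ for all $i=2,\dots,d$. Then: (i) $K_{ii}=\mathbb{P}[X_i=1]=\mathbb{E}[X_i]$ for all $i=1,\dots,d$; (ii) for all $i<j$, $-\mathrm{Cov}(X_i,X_j)>0$ and $|K_{ij}|=\sqrt{K_{ii}K_{jj}-\mathbb{P}[X_i=X_j=1]}=\sqrt{-\mathrm{Cov}(X_i,X_j)}$; (iii) for all $1<i<j\le d$, $$\mathrm{sgn}(K_{ij})=\mathrm{sgn}\Big(\mathbb{P}[X_1=1,X_i=1,X_j=1]-K_{11}K_{ii}K_{jj}+K_{11}K_{ij}^2+K_{ii}K_{1j}^2+K_{jj}K_{1i}^2\Big),$$ and this sign is $\pm1$ (never $0$). Consequently every entry of $K$ is uniquely determined by the marginal, pairwise, and threewise probabilities $\mathbb{P}[X_i=1]$, $\mathbb{P}[X_i=X_j=1]$, $\mathbb{P}[X_1=X_i=X_j=1]$.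
   Context: A binary random vector $(X_1,\dots,X_d)$ follows a determinantal point process (DPP) with correlation kernel $K$ if, writing $S=\{j: X_j=1\}$, one has $\mathbb{P}[s\subseteq S]=\mathbb{P}[X_j=1\ \forall j\in s]=\det K_s$ for all $s\subseteq\{1,\dots,d\}$, where $K_s=[K_{ij}]_{i,j\in s}$ is the principal submatrix indexed by $s$. Here $\mathrm{sgn}(x)=1$ if $x>0$, $-1$ if $x<0$, $0$ if $x=0$. *)

theory Defs
  imports "HOL-Probability.Probability" "Jordan_Normal_Form.Matrix" "Jordan_Normal_Form.Determinant"
    "Jordan_Normal_Form.Char_Poly" "Jordan_Normal_Form.DL_Submatrix"
begin

(* Coordinates are 0-based: the random vector (X_1,...,X_d) of the paper is
   (X 0, ..., X (d-1)); the random set S = {j. X_j = 1} is modelled by a pmf on nat set. *)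

definition coord :: "nat \<Rightarrow> nat set \<Rightarrow> real" where
  "coord i S = (if i \<in> S then 1 else 0)"

definition cov_pmf :: "'a pmf \<Rightarrow> ('a \<Rightarrow> real) \<Rightarrow> ('a \<Rightarrow> real) \<Rightarrow> real" where
  "cov_pmf P X Y = measure_pmf.expectation P
     (\<lambda>w. (X w - measure_pmf.expectation P X) * (Y w - measure_pmf.expectation P Y))"

definition dpp :: "nat set pmf \<Rightarrow> real mat \<Rightarrow> bool" where
  "dpp P K = (\<forall>s. s \<subseteq> {0..<dim_row K} \<longrightarrow>
      measure_pmf.prob P {S. s \<subseteq> S} = det (submatrix K s s))"

(* the standing hypotheses on the kernel in Proposition 3 (index 0 plays the role of index 1) *)
definition good_kernel :: "nat \<Rightarrow> real mat \<Rightarrow> bool" where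
  "good_kernel d K = (K \<in> carrier_mat d d \<and> transpose_mat K = K
     \<and> (\<forall>l. eigenvalue K l \<longrightarrow> 0 < l \<and> l < 1)
     \<and> (\<forall>i<d. \<forall>j<d. K $$ (i,j) \<noteq> 0)
     \<and> (\<forall>i. 1 \<le> i \<and> i < d \<longrightarrow> K $$ (0,i) > 0))"

end

theory Submission
  imports Defs
begin
lemma det2: assumes A: "(A::real mat) \<in> carrier_mat 2 2"
  shows "det A = A$$(0,0)*A$$(1,1) - A$$(0,1)*A$$(1,0)"
proof -
  have "det A = (\<Sum>j<2. A $$ (0,j) * cofactor A 0 j)" by (rule laplace_expansion_row[OF A], simp)
  also have "\<dots> = A$$(0,0)*A$$(1,1) - A$$(0,1)*A$$(1,0)"
    using A by (simp add: numeral_2_eq_2 cofactor_def det_single mat_delete_def)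
  finally show ?thesis .
qed
lemma det3: assumes A: "(A::real mat) \<in> carrier_mat 3 3"
  shows "det A = A$$(0,0)*A$$(1,1)*A$$(2,2) + A$$(0,1)*A$$(1,2)*A$$(2,0) + A$$(0,2)*A$$(1,0)*A$$(2,1)
   - A$$(0,2)*A$$(1,1)*A$$(2,0) - A$$(0,0)*A$$(1,2)*A$$(2,1) - A$$(0,1)*A$$(1,0)*A$$(2,2)"
proof -
  have "det A = (\<Sum>j<3. A $$ (0,j) * cofactor A 0 j)" by (rule laplace_expansion_row[OF A], simp)
  also have "\<dots> = A $$ (0,0) * cofactor A 0 0 + A $$ (0,1) * cofactor A 0 1 + A $$ (0,2) * cofactor A 0 2"
    by (simp add: eval_nat_numeral)
  also have "cofactor A 0 0 = A$$(1,1)*A$$(2,2) - A$$(1,2)*A$$(2,1)"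
    using A by (simp add: cofactor_def det2 mat_delete_def eval_nat_numeral)
  also have "cofactor A 0 1 = - (A$$(1,0)*A$$(2,2) - A$$(1,2)*A$$(2,0))"
    using A by (simp add: cofactor_def det2 mat_delete_def eval_nat_numeral)
  also have "cofactor A 0 2 = A$$(1,0)*A$$(2,1) - A$$(1,1)*A$$(2,0)"
    using A by (simp add: cofactor_def det2 mat_delete_def eval_nat_numeral)
  finally show ?thesis by (simp add: algebra_simps)
qed

lemma h3: "(a::real)*b*c + p*q*r + r*p*q - r*b*r - a*q*q - p*p*c = a*b*c + 2*p*q*r - a*q^2 - b*r^2 - c*p^2"
  by (simp add: algebra_simps power2_eq_square)

lemma h4: "((a::real)*b*c + 2*p*q*r - a*q^2 - b*r^2 - c*p^2) - a*b*c + a*q^2 + b*r^2 + c*p^2 = (2*p*r)*q"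
  by (simp add: algebra_simps power2_eq_square)

lemma gk_carrier: "good_kernel d K \<Longrightarrow> K \<in> carrier_mat d d"
  unfolding good_kernel_def by (rule conjunct1)
lemma gk_sym: "good_kernel d K \<Longrightarrow> transpose_mat K = K"
  unfolding good_kernel_def by (drule conjunct2, rule conjunct1)
lemma gk_nz: "good_kernel d K \<Longrightarrow> i < d \<Longrightarrow> j < d \<Longrightarrow> K $$ (i,j) \<noteq> 0"
  unfolding good_kernel_def by (drule conjunct2, drule conjunct2, drule conjunct2, drule conjunct1) blast
lemma gk_pos: "good_kernel d K \<Longrightarrow> 0 < l \<Longrightarrow> l < d \<Longrightarrow> K $$ (0,l) > 0"
  unfolding good_kernel_def by (drule conjunct2, drule conjunct2, drule conjunct2, drule conjunct2) simp
lemma sym_entry: assumes "good_kernel d K" "i < d" "j < d" shows "K $$ (j,i) = K $$ (i,j)"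
proof -
  have K: "K \<in> carrier_mat d d" "transpose_mat K = K" using gk_carrier[OF assms(1)] gk_sym[OF assms(1)] by auto
  have "K $$ (j,i) = transpose_mat K $$ (i,j)" using K(1) assms(2,3) by simp
  thus ?thesis unfolding K(2) .
qed

lemma dppI: assumes "good_kernel d K" "dpp P K" "s \<subseteq> {0..<d}"
  shows "measure_pmf.prob P {S. s \<subseteq> S} = det (submatrix K s s)"
proof -
  have K: "K \<in> carrier_mat d d" using gk_carrier[OF assms(1)] .
  hence "s \<subseteq> {0..<dim_row K}" using assms(3) by simp
  from assms(2)[unfolded dpp_def, rule_format, OF this] show ?thesis .
qed

lemma sub_carrier: assumes "good_kernel d K" "s \<subseteq> {0..<d}" "card s = n"
  shows "submatrix K s s \<in> carrier_mat n n"
proof -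
  have K: "K \<in> carrier_mat d d" using gk_carrier[OF assms(1)] .
  have e: "{a. a < dim_row K \<and> a \<in> s} = s" "{a. a < dim_col K \<and> a \<in> s} = s"
    using carrier_matD[OF K] assms(2) by auto
  show ?thesis unfolding carrier_mat_def mem_Collect_eq dim_submatrix e assms(3) by simp
qed

lemma sub_entry: assumes "good_kernel d K" "x < d" "y < d" "x \<in> s" "y \<in> s"
  shows "submatrix K s s $$ (card {a\<in>s. a < x}, card {a\<in>s. a < y}) = K $$ (x,y)"
proof -
  have K: "K \<in> carrier_mat d d" using gk_carrier[OF assms(1)] .
  show ?thesis by (rule submatrix_index_card) (use K assms in simp_all)
qed

lemma dpp1: assumes "good_kernel d K" "dpp P K" "i < d"
  shows "measure_pmf.prob P {S. i \<in> S} = K $$ (i,i)"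
proof -
  have sd: "{i} \<subseteq> {0..<d}" using assms(3) by simp
  have M: "submatrix K {i} {i} \<in> carrier_mat 1 1" by (rule sub_carrier[OF assms(1) sd]) simp
  have s1: "{a\<in>{i}. a < i} = {}" by auto
  have e: "submatrix K {i} {i} $$ (0,0) = K $$ (i,i)"
    using sub_entry[OF assms(1) assms(3) assms(3), of "{i}"] unfolding s1 by simp
  have "{S. {i} \<subseteq> S} = {S. i \<in> S}" by auto
  thus ?thesis using dppI[OF assms(1,2) sd] det_single[OF M] e by simp
qed

lemma dpp2: assumes "good_kernel d K" "dpp P K" "i < j" "j < d"
  shows "measure_pmf.prob P {S. i \<in> S \<and> j \<in> S} = K $$ (i,i) * K $$ (j,j) - (K $$ (i,j))^2"
proof -
  have sd: "{i,j} \<subseteq> {0..<d}" using assms by simp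
  have M: "submatrix K {i,j} {i,j} \<in> carrier_mat 2 2" by (rule sub_carrier[OF assms(1) sd]) (use assms in simp)
  have s1: "{a\<in>{i,j}. a < i} = {}" "{a\<in>{i,j}. a < j} = {i}" using assms by auto
  have id: "i < d" using assms by simp
  note e = sub_entry[OF assms(1), of _ _ "{i,j}"]
  have e00: "submatrix K {i,j} {i,j} $$ (0,0) = K $$ (i,i)" using e[of i i] id unfolding s1 by simp
  have e01: "submatrix K {i,j} {i,j} $$ (0,1) = K $$ (i,j)" using e[of i j] id assms(4) unfolding s1 by simp
  have e10: "submatrix K {i,j} {i,j} $$ (1,0) = K $$ (j,i)" using e[of j i] id assms(4) unfolding s1 by simp
  have e11: "submatrix K {i,j} {i,j} $$ (1,1) = K $$ (j,j)" using e[of j j] assms(4) unfolding s1 by simp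
  have "{S. {i,j} \<subseteq> S} = {S. i \<in> S \<and> j \<in> S}" by auto
  hence "measure_pmf.prob P {S. i \<in> S \<and> j \<in> S} = det (submatrix K {i,j} {i,j})"
    using dppI[OF assms(1,2) sd] by simp
  also have "\<dots> = K $$ (i,i) * K $$ (j,j) - K $$ (i,j) * K $$ (j,i)"
    unfolding det2[OF M] e00 e01 e10 e11 ..
  also have "K $$ (j,i) = K $$ (i,j)" using sym_entry[OF assms(1) id assms(4)] .
  finally show ?thesis by (simp add: power2_eq_square)
qed

lemma dpp3: assumes "good_kernel d K" "dpp P K" "0 < i" "i < j" "j < d"
  shows "measure_pmf.prob P {S. 0 \<in> S \<and> i \<in> S \<and> j \<in> S} =
    K $$ (0,0) * K $$ (i,i) * K $$ (j,j) + 2 * K $$ (0,i) * K $$ (i,j) * K $$ (0,j)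
    - K $$ (0,0) * (K $$ (i,j))^2 - K $$ (i,i) * (K $$ (0,j))^2 - K $$ (j,j) * (K $$ (0,i))^2"
proof -
  have sd: "{0,i,j} \<subseteq> {0..<d}" using assms by simp
  have M: "submatrix K {0,i,j} {0,i,j} \<in> carrier_mat 3 3" by (rule sub_carrier[OF assms(1) sd]) (use assms in simp)
  have s1: "{a\<in>{0,i,j}. a < 0} = {}" "{a\<in>{0,i,j}. a < i} = {0}" "{a\<in>{0,i,j}. a < j} = {0,i}"
    using assms by auto
  have c2: "card {0,i} = 2" using assms by simp
  have ds: "0 < d" "i < d" "j < d" using assms by auto
  note e = sub_entry[OF assms(1), of _ _ "{0,i,j}"]
  let ?M = "submatrix K {0,i,j} {0,i,j}"
  have "?M $$ (0,0) = K $$ (0,0)" "?M $$ (0,1) = K $$ (0,i)" "?M $$ (0,2) = K $$ (0,j)"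
       "?M $$ (1,0) = K $$ (i,0)" "?M $$ (1,1) = K $$ (i,i)" "?M $$ (1,2) = K $$ (i,j)"
       "?M $$ (2,0) = K $$ (j,0)" "?M $$ (2,1) = K $$ (j,i)" "?M $$ (2,2) = K $$ (j,j)"
    using e[of 0 0] e[of 0 i] e[of 0 j] e[of i 0] e[of i i] e[of i j] e[of j 0] e[of j i] e[of j j]
    unfolding s1 c2 using ds by simp_all
  note ee = this
  have "{S. {0,i,j} \<subseteq> S} = {S. 0 \<in> S \<and> i \<in> S \<and> j \<in> S}" by auto
  hence "measure_pmf.prob P {S. 0 \<in> S \<and> i \<in> S \<and> j \<in> S} = det ?M"
    using dppI[OF assms(1,2) sd] by simp
  also have "\<dots> = K$$(0,0)*K$$(i,i)*K$$(j,j) + K$$(0,i)*K$$(i,j)*K$$(j,0) + K$$(0,j)*K$$(i,0)*K$$(j,i)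
   - K$$(0,j)*K$$(i,i)*K$$(j,0) - K$$(0,0)*K$$(i,j)*K$$(j,i) - K$$(0,i)*K$$(i,0)*K$$(j,j)"
    unfolding det3[OF M] ee ..
  finally have X: "measure_pmf.prob P {S. 0 \<in> S \<and> i \<in> S \<and> j \<in> S} = K$$(0,0)*K$$(i,i)*K$$(j,j) + K$$(0,i)*K$$(i,j)*K$$(j,0) + K$$(0,j)*K$$(i,0)*K$$(j,i)
   - K$$(0,j)*K$$(i,i)*K$$(j,0) - K$$(0,0)*K$$(i,j)*K$$(j,i) - K$$(0,i)*K$$(i,0)*K$$(j,j)" .
  have sy: "K $$ (i,0) = K $$ (0,i)" "K $$ (j,0) = K $$ (0,j)" "K $$ (j,i) = K $$ (i,j)"
    using sym_entry[OF assms(1)] ds by auto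
  show ?thesis unfolding X sy by (rule h3)
qed

lemma coord_ind: "coord i = indicator {S. i \<in> S}"
  by (auto simp: coord_def indicator_def fun_eq_iff)

lemma exp_coord: "measure_pmf.expectation P (coord i) = measure_pmf.prob P {S. i \<in> S}"
  by (simp add: coord_ind)

lemma cov_coord: "cov_pmf P (coord i) (coord j) =
   measure_pmf.prob P {S. i \<in> S \<and> j \<in> S} - measure_pmf.prob P {S. i \<in> S} * measure_pmf.prob P {S. j \<in> S}"
proof -
  define a where "a = measure_pmf.prob P {S. i \<in> S}"
  define b where "b = measure_pmf.prob P {S. j \<in> S}"
  have f: "(\<lambda>w. (coord i w - a) * (coord j w - b)) =
     (\<lambda>w. indicator {S. i \<in> S \<and> j \<in> S} w - b * indicator {S. i \<in> S} w - a * indicator {S. j \<in> S} w + a * b)"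
    by (auto simp: coord_def indicator_def fun_eq_iff algebra_simps)
  have I: "integrable (measure_pmf P) (indicator A :: nat set \<Rightarrow> real)" for A
    by (rule integrable_real_indicator) (simp_all add: measure_pmf.emeasure_finite less_top[symmetric])
  have "cov_pmf P (coord i) (coord j) = measure_pmf.expectation P
     (\<lambda>w. indicator {S. i \<in> S \<and> j \<in> S} w - b * indicator {S. i \<in> S} w - a * indicator {S. j \<in> S} w + a * b)"
    unfolding cov_pmf_def exp_coord a_def[symmetric] b_def[symmetric] f ..
  also have "\<dots> = measure_pmf.prob P {S. i \<in> S \<and> j \<in> S} - b * a - a * b + a * b"
    using I by (simp add: a_def b_def)
  finally show ?thesis by (simp add: a_def b_def)
qed

lemma uniq_lt: assumes g: "good_kernel d K" "dpp P K" and g': "good_kernel d K'" "dpp P' K'"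
  and h1: "\<forall>i<d. measure_pmf.prob P' {S. i \<in> S} = measure_pmf.prob P {S. i \<in> S}"
  and h2: "\<forall>i j. i < j \<and> j < d \<longrightarrow> measure_pmf.prob P' {S. i \<in> S \<and> j \<in> S}
                                    = measure_pmf.prob P {S. i \<in> S \<and> j \<in> S}"
  and h3: "\<forall>i j. 0 < i \<and> i < j \<and> j < d \<longrightarrow> measure_pmf.prob P' {S. 0 \<in> S \<and> i \<in> S \<and> j \<in> S}
                                    = measure_pmf.prob P {S. 0 \<in> S \<and> i \<in> S \<and> j \<in> S}"
  and ij: "i < j" "j < d"
  shows "K' $$ (i,j) = K $$ (i,j)"
proof -
  have diag: "K' $$ (k,k) = K $$ (k,k)" if "k < d" for k
    using dpp1[OF g that] dpp1[OF g' that] h1 that by simp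
  have sq: "(K' $$ (k,l))^2 = (K $$ (k,l))^2" if "k < l" "l < d" for k l
    using dpp2[OF g that] dpp2[OF g' that] h2 that diag[of k] diag[of l] by simp
  have pos: "K' $$ (0,l) = K $$ (0,l)" if "0 < l" "l < d" for l
  proof -
    have "K' $$ (0,l) > 0" "K $$ (0,l) > 0" using gk_pos[OF g(1) that] gk_pos[OF g'(1) that] by auto
    thus ?thesis using sq[OF that] by (metis less_eq_real_def power2_eq_iff_nonneg)
  qed
  show ?thesis
  proof (cases "i = 0")
    case True thus ?thesis using pos ij by simp
  next
    case False
    hence i0: "0 < i" by simp
    have "K' $$ (0,i) > 0" "K' $$ (0,j) > 0" using gk_pos[OF g'(1) i0] gk_pos[OF g'(1), of j] i0 ij by auto
    moreover have "2 * K' $$ (0,i) * K' $$ (i,j) * K' $$ (0,j) = 2 * K $$ (0,i) * K $$ (i,j) * K $$ (0,j)"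
      using dpp3[OF g i0 ij] dpp3[OF g' i0 ij] h3 i0 ij diag[of 0] diag[of i] diag[of j]
        sq[of 0 i] sq[of 0 j] sq[of i j] by simp
    ultimately show ?thesis using pos[OF i0] pos[of j] i0 ij by simp
  qed
qed

theorem proposition3:
  fixes P :: "nat set pmf" and K :: "real mat" and d :: nat
  assumes "d \<ge> 3" and "good_kernel d K" and "dpp P K"
  shows
   "(\<forall>i<d. K $$ (i,i) = measure_pmf.prob P {S. i \<in> S}
            \<and> measure_pmf.prob P {S. i \<in> S} = measure_pmf.expectation P (coord i))
    \<and> (\<forall>i j. i < j \<and> j < d \<longrightarrow>
          - cov_pmf P (coord i) (coord j) > 0
        \<and> \<bar>K $$ (i,j)\<bar> = sqrt (K $$ (i,i) * K $$ (j,j) - measure_pmf.prob P {S. i \<in> S \<and> j \<in> S})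
        \<and> sqrt (K $$ (i,i) * K $$ (j,j) - measure_pmf.prob P {S. i \<in> S \<and> j \<in> S})
            = sqrt (- cov_pmf P (coord i) (coord j)))
    \<and> (\<forall>i j. 0 < i \<and> i < j \<and> j < d \<longrightarrow>
          sgn (K $$ (i,j)) = sgn (measure_pmf.prob P {S. 0 \<in> S \<and> i \<in> S \<and> j \<in> S}
               - K $$ (0,0) * K $$ (i,i) * K $$ (j,j) + K $$ (0,0) * (K $$ (i,j))^2
               + K $$ (i,i) * (K $$ (0,j))^2 + K $$ (j,j) * (K $$ (0,i))^2)
        \<and> sgn (K $$ (i,j)) \<in> {1, -1})
    \<and> (\<forall>P' K'. good_kernel d K' \<and> dpp P' K'
          \<and> (\<forall>i<d. measure_pmf.prob P' {S. i \<in> S} = measure_pmf.prob P {S. i \<in> S})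
          \<and> (\<forall>i j. i < j \<and> j < d \<longrightarrow> measure_pmf.prob P' {S. i \<in> S \<and> j \<in> S}
                                    = measure_pmf.prob P {S. i \<in> S \<and> j \<in> S})
          \<and> (\<forall>i j. 0 < i \<and> i < j \<and> j < d \<longrightarrow> measure_pmf.prob P' {S. 0 \<in> S \<and> i \<in> S \<and> j \<in> S}
                                    = measure_pmf.prob P {S. 0 \<in> S \<and> i \<in> S \<and> j \<in> S})
          \<longrightarrow> K' = K)"
proof (intro conjI allI impI)
  note g = assms(2,3)
  have Kc: "K \<in> carrier_mat d d" using gk_carrier[OF g(1)] .
  have nz: "K $$ (i,j) \<noteq> 0" if "i < d" "j < d" for i j using gk_nz[OF g(1) that] .
  have p0: "K $$ (0,l) > 0" if "0 < l" "l < d" for l using gk_pos[OF g(1) that] .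
  fix i
  { assume "i < d"
    thus "K $$ (i,i) = measure_pmf.prob P {S. i \<in> S}" using dpp1[OF g] by simp
    show "measure_pmf.prob P {S. i \<in> S} = measure_pmf.expectation P (coord i)" by (simp add: exp_coord) }
  fix j
  { assume ij: "i < j \<and> j < d"
    have c: "- cov_pmf P (coord i) (coord j) = (K $$ (i,j))^2"
      using cov_coord[of P i j] dpp2[OF g, of i j] dpp1[OF g, of i] dpp1[OF g, of j] ij by simp
    thus "- cov_pmf P (coord i) (coord j) > 0" using nz[of i j] ij by simp
    have e: "K $$ (i,i) * K $$ (j,j) - measure_pmf.prob P {S. i \<in> S \<and> j \<in> S} = (K $$ (i,j))^2"
      using dpp2[OF g, of i j] ij by simp
    show "\<bar>K $$ (i,j)\<bar> = sqrt (K $$ (i,i) * K $$ (j,j) - measure_pmf.prob P {S. i \<in> S \<and> j \<in> S})"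
      unfolding e by simp
    show "sqrt (K $$ (i,i) * K $$ (j,j) - measure_pmf.prob P {S. i \<in> S \<and> j \<in> S})
            = sqrt (- cov_pmf P (coord i) (coord j))" unfolding e c .. }
  { assume ij: "0 < i \<and> i < j \<and> j < d"
    have e: "measure_pmf.prob P {S. 0 \<in> S \<and> i \<in> S \<and> j \<in> S}
               - K $$ (0,0) * K $$ (i,i) * K $$ (j,j) + K $$ (0,0) * (K $$ (i,j))^2
               + K $$ (i,i) * (K $$ (0,j))^2 + K $$ (j,j) * (K $$ (0,i))^2
          = (2 * K $$ (0,i) * K $$ (0,j)) * K $$ (i,j)"
      unfolding dpp3[OF g, of i j, OF conjunct1[OF ij] conjunct1[OF conjunct2[OF ij]] conjunct2[OF conjunct2[OF ij]]]
      by (rule h4)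
    have "2 * K $$ (0,i) * K $$ (0,j) > 0" using p0[of i] p0[of j] ij by simp
    hence sg: "sgn (2 * K $$ (0,i) * K $$ (0,j)) = 1" by simp
    show "sgn (K $$ (i,j)) = sgn (measure_pmf.prob P {S. 0 \<in> S \<and> i \<in> S \<and> j \<in> S}
               - K $$ (0,0) * K $$ (i,i) * K $$ (j,j) + K $$ (0,0) * (K $$ (i,j))^2
               + K $$ (i,i) * (K $$ (0,j))^2 + K $$ (j,j) * (K $$ (0,i))^2)"
      unfolding e sgn_mult[of "2 * K $$ (0,i) * K $$ (0,j)" "K $$ (i,j)"] sg by simp
    show "sgn (K $$ (i,j)) \<in> {1, -1}" using nz[of i j] ij by (auto simp: sgn_real_def) }
next
  fix P' K'
  assume h: "good_kernel d K' \<and> dpp P' K'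
          \<and> (\<forall>i<d. measure_pmf.prob P' {S. i \<in> S} = measure_pmf.prob P {S. i \<in> S})
          \<and> (\<forall>i j. i < j \<and> j < d \<longrightarrow> measure_pmf.prob P' {S. i \<in> S \<and> j \<in> S}
                                    = measure_pmf.prob P {S. i \<in> S \<and> j \<in> S})
          \<and> (\<forall>i j. 0 < i \<and> i < j \<and> j < d \<longrightarrow> measure_pmf.prob P' {S. 0 \<in> S \<and> i \<in> S \<and> j \<in> S}
                                    = measure_pmf.prob P {S. 0 \<in> S \<and> i \<in> S \<and> j \<in> S})"
  note hk = conjunct1[OF h] and hd = conjunct1[OF conjunct2[OF h]]
    and H1 = conjunct1[OF conjunct2[OF conjunct2[OF h]]]
    and H2 = conjunct1[OF conjunct2[OF conjunct2[OF conjunct2[OF h]]]]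
    and H3 = conjunct2[OF conjunct2[OF conjunct2[OF conjunct2[OF h]]]]
  have Kc: "K \<in> carrier_mat d d" using gk_carrier[OF assms(2)] .
  have Kc': "K' \<in> carrier_mat d d" using gk_carrier[OF hk] .
  have lt: "K' $$ (i,j) = K $$ (i,j)" if "i < j" "j < d" for i j
    by (rule uniq_lt[OF assms(2,3) hk hd H1 H2 H3 that])
  show "K' = K"
  proof (rule eq_matI)
    fix i j assume "i < dim_row K" "j < dim_col K"
    hence ij: "i < d" "j < d" using Kc by auto
    consider "i < j" | "i = j" | "j < i" by arith
    thus "K' $$ (i,j) = K $$ (i,j)"
    proof cases
      case 1 thus ?thesis using lt ij by simp
    next
      case 2 thus ?thesis using dpp1[OF assms(2,3) ij(1)] dpp1[OF hk hd ij(1)] H1 ij by simp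
    next
      case 3 thus ?thesis using lt[of j i] ij sym_entry[OF assms(2) ij] sym_entry[OF hk ij] by simp
    qed
  qed (use Kc Kc' in auto)
qed

end
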